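(* Let $E$ be a nonzero real Banach space, let $K$ be a nonempty $w(E,E^* )$-compact convex subset of $E$, and let $\mathbb I_K$ be its indicator function ($0$ on $K$, $\infty$ off $K$). Then for all $(y^*,y^{**})\in E^*\times E^{**}$: $(y^*,y^{**})\in G\big((\partial\mathbb I_K)^{\mathbb F}\big)$ if and only if $y^{**}\in\widehat K$ and $\langle y^*,y^{**}\rangle=\sup_{x\in K}\langle x,y^*\rangle$.
   Context: $\widehat x\in E^{**}$ denotes the canonical image of $x\in E$ ($\langle x^*,\widehat x\rangle=\langle x,x^*\rangle$) and $\widehat K=\{\widehat x:x\in K\}$. For proper convex lsc $f$ on $E$, $x^*\in\partial f(x)$ iff $f(x)+f^*(x^* )=\langle x,x^*\rangle$; $\partial\mathbb I_K$ is closed, monotone and quasidense. For a multifunction $S\colon E\rightrightarrows E^*$ with nonempty graph $G(S)$: closed means $G(S)$ norm-closed; monotone means $\langle s-t,s^*-t^*\rangle\ge0$ on $G(S)$; quasidense means for every $(x,x^* )$, $\inf_{(s,s^* )\in G(S)}[\tfrac12\|s-x\|^2+\tfrac12\|s^*-x^*\|^2+\langle s-x,s^*-x^*\rangle]\le0$. Let $\varphi_S(x,x^* )=\sup_{(s,s^* )\in G(S)}[\langle s,x^*\rangle+\langle x,s^*\rangle-\langle s,s^*\rangle]$ and $\varphi_S^*$ its conjugate on $E^*\times E^{**}$ under $\langle (x,x^* ),(y^*,y^{**})\rangle=\langle x,y^*\rangle+\langle x^*,y^{**}\rangle$. For $S$ closed, monotone, quasidense, the Fitzpatrick extension $S^{\mathbb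 F}\colon E^*\rightrightarrows E^{**}$ is given by $(y^*,y^{**})\in G(S^{\mathbb F})$ iff $\varphi_S^*(y^*,y^{**})=\langle y^*,y^{**}\rangle$. *)

theory Defs
  imports "HOL-Analysis.Analysis"
begin

(* Dual space E^st is modelled as the type of bounded linear functionals
  'a \<Rightarrow>_L real; the bidual E^st^st as (('a \<Rightarrow>_L real) \<Rightarrow>_L real).
  Pairing: \<langle>x, x^st\<rangle> = blinfun_apply x^st x. *)

definition weak_topology :: "'a::real_normed_vector topology" where
  "weak_topology = topology_generated_by
     {{x. blinfun_apply f x \<in> U} | (f :: 'a \<Rightarrow>\<^sub>L real) U. open U}"

definition canon :: "'a::real_normed_vector \<Rightarrow> (('a \<Rightarrow>\<^sub>L real) \<Rightarrow>\<^sub>L real)" where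
  "canon x = Blinfun (\<lambda>f. blinfun_apply f x)"

definition indicator_fn :: "'a set \<Rightarrow> 'a \<Rightarrow> ereal" where
  "indicator_fn K x = (if x \<in> K then 0 else \<infinity>)"

definition subdiff_graph :: "('a::real_normed_vector \<Rightarrow> ereal) \<Rightarrow> ('a \<times> ('a \<Rightarrow>\<^sub>L real)) set" where
  "subdiff_graph f = {(x, xs). \<bar>f x\<bar> \<noteq> \<infinity> \<and>
       (\<forall>y. f y \<ge> f x + ereal (blinfun_apply xs (y - x)))}"

definition fitz :: "('a::real_normed_vector \<times> ('a \<Rightarrow>\<^sub>L real)) set \<Rightarrow> 'a \<Rightarrow> ('a \<Rightarrow>\<^sub>L real) \<Rightarrow> ereal" where
  "fitz G x xs = (SUP p\<in>G. ereal (blinfun_apply xs (fst p) + blinfun_apply (snd p) x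
                                   - blinfun_apply (snd p) (fst p)))"

definition fitz_conj :: "('a::real_normed_vector \<times> ('a \<Rightarrow>\<^sub>L real)) set \<Rightarrow>
     ('a \<Rightarrow>\<^sub>L real) \<Rightarrow> (('a \<Rightarrow>\<^sub>L real) \<Rightarrow>\<^sub>L real) \<Rightarrow> ereal" where
  "fitz_conj G ys yss = (SUP p\<in>(UNIV :: ('a \<times> ('a \<Rightarrow>\<^sub>L real)) set).
      ereal (blinfun_apply ys (fst p) + blinfun_apply yss (snd p)) - fitz G (fst p) (snd p))"

definition fitz_ext_graph :: "('a::real_normed_vector \<times> ('a \<Rightarrow>\<^sub>L real)) set \<Rightarrow>
     (('a \<Rightarrow>\<^sub>L real) \<times> (('a \<Rightarrow>\<^sub>L real) \<Rightarrow>\<^sub>L real)) set" where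
  "fitz_ext_graph G = {(ys, yss). fitz_conj G ys yss = ereal (blinfun_apply yss ys)}"

end

theory Submission
  imports Defs
begin


lemma canon_apply: "blinfun_apply (canon x) f = blinfun_apply f x"
  unfolding canon_def
  by (simp add: bounded_linear_Blinfun_apply bounded_bilinear.bounded_linear_left[OF bounded_bilinear_blinfun_apply])

lemma weak_topspace: "topspace (weak_topology :: 'a::real_normed_vector topology) = UNIV"
proof -
  have u: "UNIV \<in> {{x. blinfun_apply f x \<in> U} | (f :: 'a \<Rightarrow>\<^sub>L real) U. open U}"
    by (rule CollectI, rule exI[of _ 0], rule exI[of _ UNIV]) auto
  show ?thesis unfolding weak_topology_def topology_generated_by_topspace
    using top_le[OF Union_upper[OF u]] .
qed

lemma weak_open:
  fixes f :: "'a::real_normed_vector \<Rightarrow>\<^sub>L real"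
  shows "open U \<Longrightarrow> openin weak_topology {x. blinfun_apply f x \<in> U}"
  unfolding weak_topology_def
  by (rule topology_generated_by_Basis, rule CollectI, rule exI[of _ f], rule exI[of _ U]) simp

lemma weak_cont:
  fixes f :: "'a::real_normed_vector \<Rightarrow>\<^sub>L real"
  shows "continuous_map weak_topology euclideanreal (blinfun_apply f)"
  unfolding continuous_map_def weak_topspace using weak_open by auto

lemma weak_closed:
  fixes f :: "'a::real_normed_vector \<Rightarrow>\<^sub>L real"
  shows "closedin weak_topology {x. blinfun_apply f x = c}"
proof -
  have "topspace weak_topology - {x. blinfun_apply f x = c} = {x. blinfun_apply f x \<in> - {c}}"
    by (auto simp: weak_topspace)
  then show ?thesis unfolding closedin_def using weak_open[of "- {c}" f]
    by (simp add: open_Compl weak_topspace)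
qed

lemma attain:
  fixes v :: "'a::real_normed_vector \<Rightarrow>\<^sub>L real"
  assumes "compactin weak_topology K" "K \<noteq> {}"
  shows "\<exists>x\<in>K. \<forall>y\<in>K. blinfun_apply v y \<le> blinfun_apply v x"
proof -
  have "compact (blinfun_apply v ` K)"
    using image_compactin[OF assms(1) weak_cont[of v]] by simp
  from compact_attains_sup[OF this] assms(2) show ?thesis by auto
qed

lemma key2:
  fixes K :: "'a::real_normed_vector set" and z w :: "'a \<Rightarrow>\<^sub>L real" and Y :: "('a \<Rightarrow>\<^sub>L real) \<Rightarrow>\<^sub>L real"
  assumes cK: "compactin weak_topology K" and cv: "convex K"
    and H: "\<forall>v. \<exists>x\<in>K. blinfun_apply Y v \<le> blinfun_apply v x"
  shows "\<exists>x\<in>K. blinfun_apply z x = blinfun_apply Y z \<and> blinfun_apply Y w \<le> blinfun_apply w x"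
proof (rule ccontr)
  assume nex: "\<not> ?thesis"
  define T where "T = (\<lambda>x. (blinfun_apply z x, blinfun_apply w x))"
  define C where "C = T ` K"
  define S where "S = {blinfun_apply Y z} \<times> {blinfun_apply Y w..}"
  have "continuous_map weak_topology (prod_topology euclideanreal euclideanreal) T"
    unfolding T_def by (intro continuous_map_pairedI weak_cont)
  then have "compact C" unfolding C_def using image_compactin[OF cK] by fastforce
  have "linear T" unfolding T_def
    by (intro linearI) (auto simp: blinfun.add_right blinfun.scaleR_right)
  then have "convex C" unfolding C_def using convex_linear_image cv by blast
  have "K \<noteq> {}" using H by blast
  then have "C \<noteq> {}" unfolding C_def by blast
  have "convex S" "closed S" unfolding S_def
    by (auto intro!: convex_Times closed_Times)
  have "S \<inter> C = {}" using nex unfolding S_def C_def T_def by auto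
  from separating_hyperplane_closed_compact[OF \<open>convex S\<close> \<open>closed S\<close> \<open>convex C\<close> \<open>compact C\<close> \<open>C \<noteq> {}\<close> this]
  obtain a b where ab: "\<forall>x\<in>S. inner a x < b" "\<forall>x\<in>C. inner a x > b" by blast
  define v where "v = (- fst a) *\<^sub>R z + (- snd a) *\<^sub>R w"
  obtain x where x: "x \<in> K" "blinfun_apply Y v \<le> blinfun_apply v x" using H by blast
  have "inner a (blinfun_apply Y z, blinfun_apply Y w) < b"
    using ab(1) unfolding S_def by auto
  moreover have "inner a (T x) > b" using ab(2) x(1) unfolding C_def by auto
  moreover have "blinfun_apply Y v = - inner a (blinfun_apply Y z, blinfun_apply Y w)"
    unfolding v_def by (cases a) (simp add: blinfun.diff_right blinfun.minus_right blinfun.scaleR_right)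
  moreover have "blinfun_apply v x = - inner a (T x)"
    unfolding v_def T_def by (cases a) (simp add: blinfun.bilinear_simps)
  ultimately show False using x(2) by linarith
qed



definition Hc :: "'a::real_normed_vector set \<Rightarrow> (('a \<Rightarrow>\<^sub>L real) \<Rightarrow>\<^sub>L real) \<Rightarrow> bool" where
  "Hc K Y \<longleftrightarrow> compactin weak_topology K \<and> convex K \<and> (\<forall>v. \<exists>x\<in>K. blinfun_apply Y v \<le> blinfun_apply v x)"

lemma Hc_step:
  fixes z :: "'a::real_normed_vector \<Rightarrow>\<^sub>L real"
  assumes "Hc K Y"
  shows "Hc (K \<inter> {x. blinfun_apply z x = blinfun_apply Y z}) Y"
proof -
  have c: "compactin weak_topology (K \<inter> {x. blinfun_apply z x = blinfun_apply Y z})"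
    using assms closed_Int_compactin[OF weak_closed] unfolding Hc_def
    by (metis Int_commute)
  have "convex {x. blinfun_apply z x = blinfun_apply Y z}"
    unfolding convex_def by (auto simp: blinfun.bilinear_simps algebra_simps distrib_right[symmetric])
  then have cv: "convex (K \<inter> {x. blinfun_apply z x = blinfun_apply Y z})"
    using assms unfolding Hc_def by (simp add: convex_Int)
  have "\<forall>v. \<exists>x\<in>K \<inter> {x. blinfun_apply z x = blinfun_apply Y z}. blinfun_apply Y v \<le> blinfun_apply v x"
    using key2[where K=K and Y=Y and z=z] assms unfolding Hc_def by blast
  with c cv show ?thesis unfolding Hc_def by blast
qed

lemma Hc_finite:
  fixes Y :: "('a::real_normed_vector \<Rightarrow>\<^sub>L real) \<Rightarrow>\<^sub>L real"
  assumes "finite F" "Hc K Y"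
  shows "Hc (K \<inter> \<Inter>((\<lambda>z. {x. blinfun_apply z x = blinfun_apply Y z}) ` F)) Y"
  using assms(1)
proof (induction F rule: finite_induct)
  case empty
  then show ?case using assms(2) by simp
next
  case (insert z F)
  have "K \<inter> \<Inter>((\<lambda>z. {x. blinfun_apply z x = blinfun_apply Y z}) ` insert z F)
     = (K \<inter> \<Inter>((\<lambda>z. {x. blinfun_apply z x = blinfun_apply Y z}) ` F)) \<inter> {x. blinfun_apply z x = blinfun_apply Y z}"
    by auto
  then show ?case using Hc_step[OF insert.IH] by simp
qed

lemma Hc_canon:
  fixes Y :: "('a::real_normed_vector \<Rightarrow>\<^sub>L real) \<Rightarrow>\<^sub>L real"
  assumes "Hc K Y"
  shows "Y \<in> canon ` K"
proof -
  define U where "U = (\<lambda>z. {x. blinfun_apply z x = blinfun_apply Y z}) ` UNIV"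
  have cK: "compactin weak_topology K" using assms unfolding Hc_def by blast
  have "\<forall>C\<in>U. closedin weak_topology C" unfolding U_def using weak_closed by blast
  moreover have "\<forall>F. finite F \<and> F \<subseteq> U \<longrightarrow> K \<inter> \<Inter>F \<noteq> {}"
  proof (intro allI impI)
    fix F assume F: "finite F \<and> F \<subseteq> U"
    then obtain F' where F': "finite F'" "F = (\<lambda>z. {x. blinfun_apply z x = blinfun_apply Y z}) ` F'"
      unfolding U_def by (meson finite_subset_image)
    from Hc_finite[OF F'(1) assms] show "K \<inter> \<Inter>F \<noteq> {}" unfolding Hc_def F'(2) by blast
  qed
  ultimately have "K \<inter> \<Inter>U \<noteq> {}" using cK unfolding compactin_fip by blast
  then obtain x where x: "x \<in> K" "\<And>z. blinfun_apply z x = blinfun_apply Y z"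
    unfolding U_def by blast
  have "Y = canon x" by (rule blinfun_eqI) (simp add: canon_apply x(2))
  with x(1) show ?thesis by blast
qed



lemma G_eq: "subdiff_graph (indicator_fn K) =
   {(x, xs). x \<in> K \<and> (\<forall>y\<in>K. blinfun_apply xs y \<le> blinfun_apply xs x)}"
  unfolding subdiff_graph_def indicator_fn_def
  by (auto simp: blinfun.diff_right)

lemma F1: "(s, ss) \<in> G \<Longrightarrow>
   ereal (blinfun_apply xs s + blinfun_apply ss x - blinfun_apply ss s) \<le> fitz G x xs"
  unfolding fitz_def by (rule SUP_upper2[of "(s,ss)"]) auto

lemma F2:
  fixes K :: "'a::real_normed_vector set" and xs :: "'a \<Rightarrow>\<^sub>L real"
  assumes "x \<in> K" "\<And>s. s \<in> K \<Longrightarrow> blinfun_apply xs s \<le> M"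
  shows "fitz (subdiff_graph (indicator_fn K)) x xs \<le> ereal M"
  unfolding fitz_def G_eq
proof (rule SUP_least)
  fix p :: "'a \<times> ('a \<Rightarrow>\<^sub>L real)" assume "p \<in> {(x, xs). x \<in> K \<and> (\<forall>y\<in>K. blinfun_apply xs y \<le> blinfun_apply xs x)}"
  then obtain s ss where p: "p = (s, ss)" "s \<in> K" "\<forall>y\<in>K. blinfun_apply ss y \<le> blinfun_apply ss s"
    by blast
  then have "blinfun_apply ss x \<le> blinfun_apply ss s" using assms(1) by blast
  moreover have "blinfun_apply xs s \<le> M" using assms(2) p(2) .
  ultimately show "ereal (blinfun_apply xs (fst p) + blinfun_apply (snd p) x - blinfun_apply (snd p) (fst p)) \<le> ereal M"
    using p by simp
qed

lemma ereal_aux1: "\<phi> \<le> ereal c \<Longrightarrow> ereal a - \<phi> \<le> ereal r \<Longrightarrow> a - c \<le> r"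
  by (cases \<phi>) auto

lemma ereal_aux2: "ereal c \<le> \<phi> \<Longrightarrow> ereal a - \<phi> \<le> ereal (a - c)"
  by (cases \<phi>) auto

lemma SUP_attain:
  assumes "x0 \<in> K" "\<forall>y\<in>K. f y \<le> f x0"
  shows "(SUP x\<in>K. ereal (f x)) = ereal (f x0)"
  by (rule antisym) (use assms in \<open>auto intro!: SUP_least SUP_upper2[of x0]\<close>)

theorem theorem3p9:
  fixes K :: "'a::banach set"
  assumes "\<exists>x::'a. x \<noteq> 0"
    and "K \<noteq> {}"
    and "convex K"
    and "compactin weak_topology K"
  shows "\<forall>ys yss. (ys, yss) \<in> fitz_ext_graph (subdiff_graph (indicator_fn K)) \<longleftrightarrow>
           yss \<in> canon ` K \<and>
           ereal (blinfun_apply yss ys) = (SUP x\<in>K. ereal (blinfun_apply ys x))"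
proof (intro allI iffI)
  let ?G = "subdiff_graph (indicator_fn K)"
  have ex: "\<forall>v::'a \<Rightarrow>\<^sub>L real. \<exists>x. x \<in> K \<and> (\<forall>y\<in>K. blinfun_apply v y \<le> blinfun_apply v x)"
    using attain[OF assms(4) assms(2)] by blast
  obtain m :: "('a \<Rightarrow>\<^sub>L real) \<Rightarrow> 'a" where m0: "\<forall>v. m v \<in> K \<and> (\<forall>y\<in>K. blinfun_apply v y \<le> blinfun_apply v (m v))"
    using choice[OF ex] by blast
  have m: "\<And>v. m v \<in> K" "\<And>v y. y \<in> K \<Longrightarrow> blinfun_apply v y \<le> blinfun_apply v (m v)"
    using m0 by blast+
  have sup_m: "(SUP x\<in>K. ereal (blinfun_apply v x)) = ereal (blinfun_apply v (m v))" for v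
    using SUP_attain[of "m v" K "blinfun_apply v"] m by blast
  fix ys yss
  {
    assume "(ys, yss) \<in> fitz_ext_graph ?G"
    then have eq: "fitz_conj ?G ys yss = ereal (blinfun_apply yss ys)"
      unfolding fitz_ext_graph_def by simp
    have Q: "blinfun_apply ys x + blinfun_apply yss xs - blinfun_apply xs (m xs) \<le> blinfun_apply yss ys"
      if "x \<in> K" for x xs
    proof (rule ereal_aux1)
      show "fitz ?G x xs \<le> ereal (blinfun_apply xs (m xs))"
        using F2[OF that] m by blast
      have "ereal (blinfun_apply ys x + blinfun_apply yss xs) - fitz ?G x xs \<le> fitz_conj ?G ys yss"
        unfolding fitz_conj_def by (rule SUP_upper2[of "(x,xs)"]) auto
      then show "ereal (blinfun_apply ys x + blinfun_apply yss xs) - fitz ?G x xs \<le> ereal (blinfun_apply yss ys)"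
        using eq by simp
    qed
    have Q0: "blinfun_apply ys x \<le> blinfun_apply yss ys" if "x \<in> K" for x
      using Q[OF that, of 0] by simp
    have H: "blinfun_apply yss v \<le> blinfun_apply v (m v)" for v
    proof (rule ccontr)
      assume nt: "\<not> ?thesis"
      define d where "d = blinfun_apply yss v - blinfun_apply v (m v)"
      have d: "d > 0" using nt unfolding d_def by simp
      define x0 where "x0 = m ys"
      have x0: "x0 \<in> K" unfolding x0_def by (rule m)
      define n where "n = (blinfun_apply yss ys - blinfun_apply ys x0 + 1) / d"
      have n: "n \<ge> 0" using Q0[OF x0] d unfolding n_def by simp
      have "blinfun_apply v (m (n *\<^sub>R v)) \<le> blinfun_apply v (m v)" using m by blast
      then have "n * blinfun_apply v (m (n *\<^sub>R v)) \<le> n * blinfun_apply v (m v)"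
        using n by (rule mult_left_mono)
      moreover have "blinfun_apply ys x0 + n * blinfun_apply yss v - n * blinfun_apply v (m (n *\<^sub>R v)) \<le> blinfun_apply yss ys"
        using Q[OF x0, of "n *\<^sub>R v"] by (simp add: blinfun.scaleR_right blinfun.scaleR_left)
      ultimately have "blinfun_apply ys x0 + n * d \<le> blinfun_apply yss ys"
        unfolding d_def by (simp add: algebra_simps)
      moreover have "n * d = blinfun_apply yss ys - blinfun_apply ys x0 + 1"
        unfolding n_def using d by simp
      ultimately show False by simp
    qed
    have "Hc K yss" unfolding Hc_def using assms(3,4) H m(1) by blast
    then have "yss \<in> canon ` K" by (rule Hc_canon)
    moreover have "blinfun_apply yss ys = blinfun_apply ys (m ys)"
      using H[of ys] Q0[OF m(1)[of ys]] by simp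
    ultimately show "yss \<in> canon ` K \<and> ereal (blinfun_apply yss ys) = (SUP x\<in>K. ereal (blinfun_apply ys x))"
      using sup_m by simp
  }
  {
    assume a: "yss \<in> canon ` K \<and> ereal (blinfun_apply yss ys) = (SUP x\<in>K. ereal (blinfun_apply ys x))"
    then obtain x0 where x0: "x0 \<in> K" "yss = canon x0" by blast
    have "ereal (blinfun_apply ys x0) = (SUP x\<in>K. ereal (blinfun_apply ys x))"
      using a x0 by (simp add: canon_apply)
    then have mx: "blinfun_apply ys y \<le> blinfun_apply ys x0" if "y \<in> K" for y
      using SUP_upper[OF that, of "\<lambda>x. ereal (blinfun_apply ys x)"] by (metis ereal_less_eq(3))
    have G1: "(x0, ys) \<in> ?G" unfolding G_eq using x0 mx by blast
    have G0: "(x0, 0) \<in> ?G" unfolding G_eq using x0 by simp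
    have fx0: "fitz ?G x0 ys = ereal (blinfun_apply ys x0)"
    proof (rule antisym)
      show "fitz ?G x0 ys \<le> ereal (blinfun_apply ys x0)" using F2[OF x0(1)] mx by blast
      show "ereal (blinfun_apply ys x0) \<le> fitz ?G x0 ys" using F1[OF G0, of ys x0] by simp
    qed
    have "fitz_conj ?G ys yss = ereal (blinfun_apply ys x0)"
    proof (rule antisym)
      show "fitz_conj ?G ys yss \<le> ereal (blinfun_apply ys x0)"
        unfolding fitz_conj_def
      proof (rule SUP_least)
        fix p :: "'a \<times> ('a \<Rightarrow>\<^sub>L real)"
        obtain x xs where p: "p = (x, xs)" by (cases p)
        have "ereal (blinfun_apply xs x0 + blinfun_apply ys x - blinfun_apply ys x0) \<le> fitz ?G x xs"
          by (rule F1[OF G1])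
        then have "ereal (blinfun_apply ys x + blinfun_apply xs x0) - fitz ?G x xs
            \<le> ereal (blinfun_apply ys x + blinfun_apply xs x0 - (blinfun_apply xs x0 + blinfun_apply ys x - blinfun_apply ys x0))"
          by (rule ereal_aux2)
        then show "ereal (blinfun_apply ys (fst p) + blinfun_apply yss (snd p)) - fitz ?G (fst p) (snd p) \<le> ereal (blinfun_apply ys x0)"
          using p x0(2) by (simp add: canon_apply)
      qed
      show "ereal (blinfun_apply ys x0) \<le> fitz_conj ?G ys yss"
        unfolding fitz_conj_def
        by (rule SUP_upper2[of "(x0, ys)"]) (simp_all add: fx0 x0(2) canon_apply)
    qed
    then show "(ys, yss) \<in> fitz_ext_graph ?G"
      unfolding fitz_ext_graph_def using x0(2) by (simp add: canon_apply)
  }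
qed

end
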